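(* Let $X=\{0,1,2,3\}$, $s=(1\,3)$, $r=(0\,1\,2\,3)$, $A=\langle s,r\rangle$ (dihedral of order $8$), and let $b\in\mathrm{St}(1)\le\mathrm{Aut}(X^* )$ be given by $b|_0=b$, $b|_1=s$, $b|_2=s$, $b|_3=sr$. Let $B=\langle b\rangle$ (of order $2$) and $G=\langle A\cup B\rangle$. Then: (a) $G$ is not orbitwise-abelian (hence not strongly orbitwise-abelian); (b) the dynamical system $\Sigma_{\{b\}}$ is not eventually trivial (indeed $sr\in\Sigma_{\{b\}}(\{sr\})$); (c) $G$ is periodic.
   Context: $X^*$ is the free monoid on $X$ viewed as a rooted tree; $\mathrm{Aut}(X^* )$ acts on the right ($gh$ = first $g$ then $h$, so $sr$ means first $s$ then $r$); sections are defined by $(u\star v).g=u.g\star v.(g|_u)$; permutations of $X$ are rooted automorphisms; $\mathrm{St}(1)$ is the first layer stabiliser; $0$ is the distinguished letter. $\mathrm{st}_A(0)$ is the stabiliser of $0$; $\mathrm{orb}_c(0)$ the $\langle c\rangle$-orbit of $0$ and $\ell_c(0)$ its length. $G$ is orbitwise-abelian if for every $a\in A$ the group $\langle b'|_{0.c}:c\in\langle a\rangle\setminus\mathrm{st}_A(0),b'\in B\rangle$ is abelian. $\mathrm{mp}_A(0,x)=\{c\in A:0.c=x\}$; $\mathfrak C(a,x)=\{cac^{-1}:c\in\mathrm{mp}_A(0,x)\}$; $\mathfrak X(a,x)=\bigcup_{c\in\mathfrak C(a,x)}\mathrm{orb}_c(0)\setminus\{0\}$. For $S\subseteq B$: $H_S(a,x)=\langle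 b'|_y:y\in\mathfrak X(a,x),b'\in S\rangle$, $\sigma_S(a,x)=\langle b'|_{0.c}b'|_{0.c^2}\cdots b'|_{0.c^{\ell_c(0)-1}}:c\in\mathfrak C(a,x),b'\in S\rangle\cdot H_S(a,x)'$, $\Sigma_S(P)=\bigcup_{a\in P}\bigcup_{x\in X}\sigma_S(a,x)$; eventually trivial: for every $a$ there is $n$ with $\Sigma_S^m(\{a\})\subseteq\{1_A\}$ for all $m>n$. Periodic: every element has finite order. *)

theory Defs
  imports Main "HOL-Library.Numeral_Type"
begin

text \<open>The alphabet X = {0,1,2,3} is the type 4; X^* is the type of lists over it.
 Automorphisms of X^* are functions 4 list => 4 list, acting on the right:
 u.g is written g u.  Product gh = first g then h, i.e. the function h o g.\<close>

type_synonym aut = "4 list \<Rightarrow> 4 list"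

definition mult :: "aut \<Rightarrow> aut \<Rightarrow> aut" where
  "mult g h = h \<circ> g"

definition letter :: "aut \<Rightarrow> 4 \<Rightarrow> 4" where
  "letter g x = hd (g [x])"

text \<open>Section: (u v).g = u.g (v.(g|_u)).\<close>
definition sect :: "aut \<Rightarrow> 4 list \<Rightarrow> aut" where
  "sect g u = (\<lambda>v. drop (length u) (g (u @ v)))"

definition rooted :: "(4 \<Rightarrow> 4) \<Rightarrow> aut" where
  "rooted p = (\<lambda>w. case w of [] \<Rightarrow> [] | x # v \<Rightarrow> p x # v)"

text \<open>Subgroup generated by a set of automorphisms (elements of S are bijections).\<close>
inductive_set gen :: "aut set \<Rightarrow> aut set" for S where
  gen_id: "id \<in> gen S"
| gen_mul: "g \<in> gen S \<Longrightarrow> x \<in> S \<Longrightarrow> mult g x \<in> gen S"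
| gen_inv: "g \<in> gen S \<Longrightarrow> x \<in> S \<Longrightarrow> mult g (inv x) \<in> gen S"

definition abelian :: "aut set \<Rightarrow> bool" where
  "abelian H \<longleftrightarrow> (\<forall>g\<in>H. \<forall>h\<in>H. mult g h = mult h g)"

definition commutator :: "aut \<Rightarrow> aut \<Rightarrow> aut" where
  "commutator g h = mult (mult (mult (inv g) (inv h)) g) h"

definition derived :: "aut set \<Rightarrow> aut set" where
  "derived H = gen {commutator g h | g h. g \<in> H \<and> h \<in> H}"

definition setprod :: "aut set \<Rightarrow> aut set \<Rightarrow> aut set" where
  "setprod K H = {mult k h | k h. k \<in> K \<and> h \<in> H}"

definition stab :: "aut set \<Rightarrow> 4 \<Rightarrow> aut set" where
  "stab A x = {c \<in> A. letter c x = x}"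

definition orb :: "aut \<Rightarrow> 4 \<Rightarrow> 4 set" where
  "orb c x = {letter (c ^^ n) x | n. True}"

definition orblen :: "aut \<Rightarrow> 4 \<Rightarrow> nat" where
  "orblen c x = card (orb c x)"

definition orbitwise_abelian :: "aut set \<Rightarrow> aut set \<Rightarrow> bool" where
  "orbitwise_abelian A B \<longleftrightarrow>
     (\<forall>a\<in>A. abelian (gen {sect b' [letter c 0] | c b'. c \<in> gen {a} - stab A 0 \<and> b' \<in> B}))"

definition mp :: "aut set \<Rightarrow> 4 \<Rightarrow> 4 \<Rightarrow> aut set" where
  "mp A y x = {c \<in> A. letter c y = x}"

text \<open>c a c^{-1} (first c, then a, then c^{-1}).\<close>
definition CC :: "aut set \<Rightarrow> aut \<Rightarrow> 4 \<Rightarrow> aut set" where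
  "CC A a x = {mult (mult c a) (inv c) | c. c \<in> mp A 0 x}"

definition XX :: "aut set \<Rightarrow> aut \<Rightarrow> 4 \<Rightarrow> 4 set" where
  "XX A a x = (\<Union>c\<in>CC A a x. orb c 0 - {0})"

definition HH :: "aut set \<Rightarrow> aut set \<Rightarrow> aut \<Rightarrow> 4 \<Rightarrow> aut set" where
  "HH A S a x = gen {sect b' [y] | y b'. y \<in> XX A a x \<and> b' \<in> S}"

definition secprod :: "aut \<Rightarrow> aut \<Rightarrow> aut" where
  "secprod b' c = foldl mult id
      (map (\<lambda>i. sect b' [letter (c ^^ i) 0]) [1..<orblen c 0])"

definition sigma :: "aut set \<Rightarrow> aut set \<Rightarrow> aut \<Rightarrow> 4 \<Rightarrow> aut set" where
  "sigma A S a x = setprod (gen {secprod b' c | c b'. c \<in> CC A a x \<and> b' \<in> S})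
                           (derived (HH A S a x))"

definition Sigma :: "aut set \<Rightarrow> aut set \<Rightarrow> aut set \<Rightarrow> aut set" where
  "Sigma A S P = (\<Union>a\<in>P. \<Union>x. sigma A S a x)"

definition eventually_trivial :: "aut set \<Rightarrow> aut set \<Rightarrow> bool" where
  "eventually_trivial A S \<longleftrightarrow>
     (\<forall>a\<in>A. \<exists>n. \<forall>m>n. (Sigma A S ^^ m) {a} \<subseteq> {id})"

definition periodic :: "aut set \<Rightarrow> bool" where
  "periodic G \<longleftrightarrow> (\<forall>g\<in>G. \<exists>n>0. g ^^ n = id)"

definition s_perm :: "4 \<Rightarrow> 4" where
  "s_perm x = (if x = 1 then 3 else if x = 3 then 1 else x)"

definition s :: aut where "s = rooted s_perm"
definition r :: aut where "r = rooted (\<lambda>x. x + 1)"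

fun bb :: aut where
  "bb [] = []"
| "bb (x # w) = x # (if x = 0 then bb w else if x = 1 \<or> x = 2 then s w else mult s r w)"

definition A :: "aut set" where "A = gen {s, r}"
definition B :: "aut set" where "B = gen {bb}"
definition G :: "aut set" where "G = gen {s, r, bb}"

end

theory Submission
  imports Defs
begin


lemma x4: "(x::4) = 0 \<or> x = 1 \<or> x = 2 \<or> x = 3"
proof (induct x rule: bit0_induct)
  case (of_int z)
  then have "z = 0 \<or> z = 1 \<or> z = 2 \<or> z = 3" by auto
  then show ?case by auto
qed

lemma UNIV4: "(UNIV::4 set) = {0,1,2,3}" using x4 by auto

datatype lt = Ls | Lt | Lb

fun ev :: "lt \<Rightarrow> aut" where
  "ev Ls = s" | "ev Lt = mult s r" | "ev Lb = bb"

fun eval :: "lt list \<Rightarrow> aut" where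
  "eval [] = id" | "eval (l # w) = mult (ev l) (eval w)"

fun lp :: "lt \<Rightarrow> 4 \<Rightarrow> 4" where
  "lp Ls x = - x" | "lp Lt x = 1 - x" | "lp Lb x = x"

definition bsec :: "4 \<Rightarrow> lt list" where
  "bsec x = (if x = 0 then [Lb] else if x = 3 then [Lt] else [Ls])"

fun lsec :: "lt \<Rightarrow> 4 \<Rightarrow> lt list" where
  "lsec Lb x = bsec x" | "lsec Ls x = []" | "lsec Lt x = []"

fun pm :: "lt list \<Rightarrow> 4 \<Rightarrow> 4" where
  "pm [] x = x" | "pm (l # w) x = pm w (lp l x)"

fun sec :: "lt list \<Rightarrow> 4 \<Rightarrow> lt list" where
  "sec [] x = []" | "sec (l # w) x = lsec l x @ sec w (lp l x)"

lemma eval_append: "eval (u @ v) = eval v \<circ> eval u"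
  by (induct u) (auto simp: mult_def)

lemma pm_append: "pm (u @ v) x = pm v (pm u x)"
  by (induct u arbitrary: x) auto

lemma sec_append: "sec (u @ v) x = sec u x @ sec v (pm u x)"
  by (induct u arbitrary: x) auto

lemma s_perm_neg: "s_perm x = - x"
  using x4[of x] by (auto simp: s_perm_def)

lemma ev_nil: "ev l [] = []"
  by (cases l) (auto simp: s_def r_def rooted_def mult_def)

lemma eval_nil: "eval w [] = []"
  by (induct w) (auto simp: mult_def ev_nil)

lemma ev_cons: "ev l (x # v) = lp l x # eval (lsec l x) v"
proof (cases l)
  case Ls then show ?thesis by (simp add: s_def rooted_def s_perm_neg)
next
  case Lt then show ?thesis by (simp add: s_def r_def rooted_def s_perm_neg mult_def)
next
  case Lb then show ?thesis using x4[of x] by (auto simp: bsec_def mult_def)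
qed

lemma eval_cons: "eval w (x # v) = pm w x # eval (sec w x) v"
  by (induct w arbitrary: x v) (auto simp: mult_def ev_cons eval_append)

lemma bb_invol: "bb (bb v) = v"
proof (induct v)
  case Nil then show ?case by simp
next
  case (Cons x v)
  have ss: "s (s u) = u" for u
    by (cases u) (auto simp: s_def rooted_def s_perm_neg)
  have tt: "mult s r (mult s r u) = u" for u
    by (cases u) (auto simp: s_def r_def rooted_def s_perm_neg mult_def)
  show ?case using Cons ss tt by auto
qed

lemma ev_invol: "ev l \<circ> ev l = id"
proof (rule ext)
  fix v show "(ev l \<circ> ev l) v = id v"
  proof (cases l)
    case Lb then show ?thesis by (simp add: bb_invol)
  next
    case Ls then show ?thesis by (cases v) (auto simp: s_def rooted_def s_perm_neg)
  next
    case Lt then show ?thesis by (cases v) (auto simp: s_def r_def rooted_def s_perm_neg mult_def)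
  qed
qed

lemma eval_single: "eval [l] = ev l" by (simp add: mult_def)

lemma eval_rev_cancel: "eval (w @ rev w) = id"
proof (induct w)
  case Nil then show ?case by simp
next
  case (Cons l w)
  have "eval ((l # w) @ rev (l # w)) = eval ([l] @ (w @ rev w) @ [l])" by simp
  also have "\<dots> = ev l \<circ> eval (w @ rev w) \<circ> ev l" by (simp only: eval_append eval_single)
  also have "\<dots> = id" by (simp only: Cons.hyps comp_id ev_invol)
  finally show ?case .
qed

lemma eval_rev_cancel2: "eval w \<circ> eval (rev w) = id"
  using eval_rev_cancel[of "rev w"] by (simp add: eval_append)

lemma eval_rev_cancel1: "eval (rev w) \<circ> eval w = id"
  using eval_rev_cancel[of "w"] by (simp add: eval_append)

lemma eval_bb_cancel: "eval (u @ [Lb, Lb] @ v) = eval (u @ v)"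
proof -
  have "eval [Lb, Lb] = id" using ev_invol[of Lb] by (simp add: mult_def)
  then show ?thesis
    by (metis append.simps(1) append_Cons eval_append comp_id fun.map_id)
qed


definition fo :: "aut \<Rightarrow> bool" where "fo f \<longleftrightarrow> (\<exists>n>0. f ^^ n = id)"

lemma fo_id: "fo id" unfolding fo_def by (rule exI[of _ 1]) simp

lemma funpow_comm_comp: "(f \<circ> g) ^^ n \<circ> f = f \<circ> (g \<circ> f) ^^ n"
proof (induct n)
  case 0 then show ?case by simp
next
  case (Suc n)
  have "(f \<circ> g) ^^ Suc n \<circ> f = ((f \<circ> g) ^^ n \<circ> f) \<circ> (g \<circ> f)"
    by (simp only: funpow_Suc_right comp_assoc)
  also have "\<dots> = f \<circ> ((g \<circ> f) ^^ n \<circ> (g \<circ> f))" using Suc by (simp only: comp_assoc)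
  also have "\<dots> = f \<circ> (g \<circ> f) ^^ Suc n" by (simp only: funpow_Suc_right)
  finally show ?case .
qed

lemma fo_rot: assumes "fo (eval (u @ v))" shows "fo (eval (v @ u))"
proof -
  from assms obtain n where n: "n > 0" "(eval v \<circ> eval u) ^^ n = id" unfolding fo_def by (auto simp: eval_append)
  have "(eval u \<circ> eval v) ^^ n \<circ> eval u = eval u" using funpow_comm_comp[where f="eval u" and g="eval v" and n=n] n by simp
  then have "(eval u \<circ> eval v) ^^ n \<circ> eval u \<circ> eval (rev u) = eval u \<circ> eval (rev u)" by simp
  then have "(eval u \<circ> eval v) ^^ n = id" using eval_rev_cancel2[of u] by (simp add: comp_assoc)
  then show ?thesis using n unfolding fo_def by (auto simp: eval_append)
qed

lemma fo_rot_iff: "fo (eval (u @ v)) \<longleftrightarrow> fo (eval (v @ u))"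
  using fo_rot by blast

lemma fo_pow_back: assumes "fo (f ^^ j)" "j > 0" shows "fo f"
proof -
  from assms obtain n where "n > 0" "(f ^^ j) ^^ n = id" unfolding fo_def by auto
  then show ?thesis unfolding fo_def using assms(2) by (auto simp: funpow_mult intro!: exI[of _ "j * n"])
qed

lemma fo_pow: assumes "fo f" shows "fo (f ^^ j)"
proof -
  from assms obtain n where n: "n > 0" "f ^^ n = id" unfolding fo_def by auto
  have "(f ^^ j) ^^ n = (f ^^ n) ^^ j" by (simp add: funpow_mult mult.commute)
  also have "\<dots> = id" using n by (induct j) auto
  finally show ?thesis unfolding fo_def using n by auto
qed

lemma eval_pow: "eval (concat (replicate n w)) = eval w ^^ n"
  by (induct n) (auto simp: eval_append funpow_Suc_right simp del: funpow.simps)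

lemma fo_twice: "fo (eval z) \<Longrightarrow> fo (eval (z @ z))"
  using fo_pow[where f="eval z" and j=2] by (simp add: eval_append numeral_2_eq_2)

lemma fo_four: "fo (eval z) \<Longrightarrow> fo (eval (z @ z @ z @ z))"
  using fo_pow[where f="eval z" and j=4] by (simp add: eval_append numeral_eq_Suc comp_assoc)

lemma fo_four_back: "fo (eval (w @ w @ w @ w)) \<Longrightarrow> fo (eval w)"
  using fo_pow_back[where f="eval w" and j=4] by (simp add: eval_append numeral_eq_Suc comp_assoc)

lemma eval_pow_cons: "pm u x = x \<Longrightarrow> (eval u ^^ m) (x # v) = x # (eval (sec u x) ^^ m) v"
  by (induct m) (auto simp: eval_cons)

lemma eval_pow_nil: "(eval u ^^ m) [] = []"
  by (induct m) (auto simp: eval_nil)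

lemma fo_lift:
  assumes pid: "\<And>x. pm u x = x" and ch: "\<And>x. fo (eval (sec u x))"
  shows "fo (eval u)"
proof -
  have "\<forall>x. \<exists>n>0. eval (sec u x) ^^ n = id" using ch unfolding fo_def by auto
  then obtain n where n: "\<And>x. n x > 0" "\<And>x. eval (sec u x) ^^ n x = id" by metis
  define N where "N = (\<Prod>x\<in>UNIV. n x)"
  have Npos: "N > 0" unfolding N_def using n(1) by (simp add: prod_pos)
  have "eval (sec u x) ^^ N = id" for x
  proof -
    have "n x dvd N" unfolding N_def by (rule dvd_prodI) auto
    then obtain q where "N = n x * q" by (auto elim: dvdE)
    then have "eval (sec u x) ^^ N = (eval (sec u x) ^^ n x) ^^ q" by (simp add: funpow_mult)
    also have "\<dots> = id" using n(2)[of x] by (induct q) auto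
    finally show ?thesis .
  qed
  then have "(eval u ^^ N) ys = ys" for ys
    by (cases ys) (auto simp: eval_pow_nil eval_pow_cons pid)
  then have "eval u ^^ N = id" by auto
  then show ?thesis unfolding fo_def using Npos by auto
qed

lemma pm_form: "\<exists>e c. \<forall>x. pm w x = (if e then x else - x) + c"
proof (induct w)
  case Nil then show ?case by (auto intro: exI[of _ True] exI[of _ 0])
next
  case (Cons l w)
  then obtain e c where ec: "\<forall>x. pm w x = (if e then x else - x) + c" by auto
  show ?case
  proof (cases l)
    case Ls then show ?thesis using ec
      by (auto intro!: exI[of _ "\<not> e"] exI[of _ c])
  next
    case Lt then show ?thesis using ec
      by (auto intro!: exI[of _ "\<not> e"] exI[of _ "(if e then 1 else -1) + c"] simp: algebra_simps)
  next
    case Lb then show ?thesis using ec by auto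
  qed
qed

lemma four_zero: "(c::4) + c + c + c = 0"
  using x4[of c] by auto

lemma pm4: "pm w (pm w (pm w (pm w x))) = x"
proof -
  obtain e c where ec: "\<forall>x. pm w x = (if e then x else - x) + c" using pm_form by blast
  have h: "\<And>y. pm w y = (if e then y else - y) + c" using ec by blast
  show ?thesis using four_zero[of c] by (cases e) (simp_all only: h if_True if_False, simp_all add: algebra_simps)
qed

lemma pm_inj: "pm w x = pm w y \<Longrightarrow> x = y"
proof -
  obtain e c where ec: "\<forall>x. pm w x = (if e then x else - x) + c" using pm_form by blast
  assume "pm w x = pm w y" then show ?thesis using ec by (cases e) auto
qed

lemma pm_surj: "\<exists>y. pm w y = x"
proof -
  obtain e c where ec: "\<forall>x. pm w x = (if e then x else - x) + c" using pm_form by blast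
  show ?thesis using ec by (cases e) (auto intro: exI[of _ "x - c"] exI[of _ "c - x"])
qed

definition pw4 :: "lt list \<Rightarrow> lt list" where "pw4 w = w @ w @ w @ w"

lemma pm_pw4: "pm (pw4 w) x = x"
  by (simp add: pw4_def pm_append pm4)

lemma sec_pw4: "sec (pw4 w) x = sec w x @ sec w (pm w x) @ sec w (pm w (pm w x)) @ sec w (pm w (pm w (pm w x)))"
  by (simp add: pw4_def sec_append pm_append)

definition op :: "lt list \<Rightarrow> 4 \<Rightarrow> lt list" where
  "op w x = (if pm w x = x then sec w x
     else if pm w (pm w x) = x then sec w x @ sec w (pm w x)
     else sec w x @ sec w (pm w x) @ sec w (pm w (pm w x)) @ sec w (pm w (pm w (pm w x))))"

lemma fo_by_orbits:
  assumes "\<And>x. fo (eval (op w x))"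
  shows "fo (eval w)"
proof -
  have "fo (eval (pw4 w))"
  proof (rule fo_lift)
    show "pm (pw4 w) x = x" for x by (rule pm_pw4)
    fix x
    show "fo (eval (sec (pw4 w) x))"
    proof (cases "pm w x = x")
      case True
      then show ?thesis using fo_four[OF assms[of x]] by (simp add: sec_pw4 op_def)
    next
      case F: False
      show ?thesis
      proof (cases "pm w (pm w x) = x")
        case True
        then show ?thesis using fo_twice[OF assms[of x]] F by (simp add: sec_pw4 op_def)
      next
        case False
        then show ?thesis using assms[of x] F by (simp add: sec_pw4 op_def)
      qed
    qed
  qed
  then show ?thesis unfolding pw4_def by (rule fo_four_back)
qed


definition cnt :: "lt list \<Rightarrow> nat" where "cnt w = length (filter (\<lambda>l. l = Lb) w)"
definition nS :: "lt list \<Rightarrow> nat" where "nS w = length (filter (\<lambda>l. l = Ls) w)"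
definition nT :: "lt list \<Rightarrow> nat" where "nT w = length (filter (\<lambda>l. l = Lt) w)"

lemma cnt_simps[simp]: "cnt [] = 0" "cnt (l # w) = (if l = Lb then Suc (cnt w) else cnt w)"
  "cnt (u @ v) = cnt u + cnt v"
  by (auto simp: cnt_def)
lemma nS_simps[simp]: "nS [] = 0" "nS (l # w) = (if l = Ls then Suc (nS w) else nS w)"
  "nS (u @ v) = nS u + nS v"
  by (auto simp: nS_def)
lemma nT_simps[simp]: "nT [] = 0" "nT (l # w) = (if l = Lt then Suc (nT w) else nT w)"
  "nT (u @ v) = nT u + nT v"
  by (auto simp: nT_def)

lemma lp_invol: "lp l (lp l x) = x"
  by (cases l) auto

lemma sum_lp: "(\<Sum>x\<in>UNIV. f (lp l x)) = (\<Sum>x\<in>UNIV. (f x :: nat))"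
proof -
  have inj: "inj (lp l)" by (metis injI lp_invol)
  have surj: "lp l ` UNIV = UNIV" by (metis surjI lp_invol)
  have "(\<Sum>x\<in>UNIV. f x) = (\<Sum>x\<in>lp l ` UNIV. f x)" using surj by simp
  also have "\<dots> = (\<Sum>x\<in>UNIV. f (lp l x))" using inj by (simp add: sum.reindex)
  finally show ?thesis by simp
qed

lemma sum4: "(\<Sum>x\<in>UNIV. f x) = f (0::4) + f 1 + f 2 + (f 3 :: nat)"
proof -
  have "(\<Sum>x\<in>UNIV. f x) = (\<Sum>x\<in>{0,1,2,3}. f x)" by (simp only: UNIV4)
  also have "\<dots> = f (0::4) + (f 1 + (f 2 + f 3))"
    by (subst sum.insert; simp)+
  finally show ?thesis by simp
qed

lemma sum_gen:
  fixes F :: "lt list \<Rightarrow> nat"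
  assumes Fnil: "F [] = 0" and Fapp: "\<And>u v. F (u @ v) = F u + F v"
  shows "(\<Sum>x\<in>UNIV. F (sec w x)) = cnt w * (\<Sum>x\<in>UNIV. F (bsec x))"
proof (induct w)
  case Nil then show ?case by (simp add: Fnil)
next
  case (Cons l w)
  have "(\<Sum>x\<in>UNIV. F (sec (l # w) x)) = (\<Sum>x\<in>UNIV. F (lsec l x)) + (\<Sum>x\<in>UNIV. F (sec w (lp l x)))"
    by (simp add: Fapp sum.distrib)
  also have "(\<Sum>x\<in>UNIV. F (sec w (lp l x))) = (\<Sum>x\<in>UNIV. F (sec w x))"
    by (rule sum_lp)
  finally show ?case using Cons by (cases l) (simp_all add: Fnil)
qed

lemma sum_cnt: "(\<Sum>x\<in>UNIV. cnt (sec w x)) = cnt w"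
  using sum_gen[of cnt w] by (simp add: sum4 bsec_def)

lemma sum_nS: "(\<Sum>x\<in>UNIV. nS (sec w x)) = 2 * cnt w"
  using sum_gen[of nS w] by (simp add: sum4 bsec_def)

lemma sum_nT: "(\<Sum>x\<in>UNIV. nT (sec w x)) = cnt w"
  using sum_gen[of nT w] by (simp add: sum4 bsec_def)

lemma subset_sum_le: "(\<Sum>y\<in>S. cnt (sec w y)) \<le> cnt w"
proof -
  have "(\<Sum>y\<in>S. cnt (sec w y)) \<le> (\<Sum>y\<in>UNIV. cnt (sec w y))"
    by (rule sum_mono2) auto
  then show ?thesis using sum_cnt by simp
qed

lemma single_le: "cnt (sec w x) \<le> cnt w"
  using subset_sum_le[of w "{x}"] by simp

lemma pair_le: "x \<noteq> y \<Longrightarrow> cnt (sec w x) + cnt (sec w y) \<le> cnt w"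
  using subset_sum_le[of w "{x,y}"] by simp

lemma triple_le: assumes "x \<noteq> y" "x \<noteq> z" "y \<noteq> z"
  shows "cnt (sec w x) + cnt (sec w y) + cnt (sec w z) \<le> cnt w"
proof -
  have "(\<Sum>v\<in>{x,y,z}. cnt (sec w v)) = cnt (sec w x) + (cnt (sec w y) + cnt (sec w z))"
    using assms by (subst sum.insert) auto
  then show ?thesis using subset_sum_le[of w "{x,y,z}"] by simp
qed

lemma stall1: "cnt (sec w x) = cnt w \<Longrightarrow> set (sec w x) \<subseteq> {Lb}"
proof (induct w arbitrary: x)
  case Nil then show ?case by simp
next
  case (Cons l w)
  show ?case
  proof (cases l)
    case Lb
    have le: "cnt (sec w x) \<le> cnt w" by (rule single_le)
    have "cnt (bsec x) + cnt (sec w x) = Suc (cnt w)" using Cons.prems Lb by simp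
    then have "x = 0" "cnt (sec w x) = cnt w" using le by (auto simp: bsec_def split: if_splits)
    then show ?thesis using Cons.hyps[of x] Lb by (simp add: bsec_def)
  qed (use Cons in auto)
qed

lemma lp_plus2: "lp l (x + 2) = lp l x + 2"
  by (cases l) (auto simp: algebra_simps)

definition adj :: "4 \<Rightarrow> 4 \<Rightarrow> bool" where "adj x y \<longleftrightarrow> y = x + 1 \<or> x = y + 1"

definition good :: "lt \<times> lt \<Rightarrow> bool" where
  "good p \<longleftrightarrow> (fst p = Lb \<and> snd p \<in> {Ls, Lt}) \<or> (snd p = Lb \<and> fst p \<in> {Ls, Lt})"

lemma adj_lp: "adj x y \<Longrightarrow> adj (lp l x) (lp l y)"
  by (cases l) (auto simp: adj_def algebra_simps)

lemma adj_ne: "adj x y \<Longrightarrow> x \<noteq> y"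
  by (auto simp: adj_def)


lemma lsec_nonb: "l \<noteq> Lb \<Longrightarrow> lsec l y = []"
  by (cases l) auto

lemma stall2: "cnt (sec w x) + cnt (sec w (x + 2)) = cnt w \<Longrightarrow> set (sec w x) \<union> set (sec w (x + 2)) \<subseteq> {Lb, Ls}"
proof (induct w arbitrary: x)
  case Nil then show ?case by simp
next
  case (Cons l w)
  show ?case
  proof (cases "l = Lb")
    case Lb: True
    have ne: "x \<noteq> x + 2" by simp
    have le: "cnt (sec w x) + cnt (sec w (x + 2)) \<le> cnt w" by (rule pair_le[OF ne])
    have eq: "cnt (bsec x) + cnt (bsec (x + 2)) + (cnt (sec w x) + cnt (sec w (x + 2))) = Suc (cnt w)"
      using Cons.prems Lb by simp
    have b1: "cnt (bsec x) + cnt (bsec (x + 2)) \<le> 1" using x4[of x] by (auto simp: bsec_def)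
    from eq le b1 have "cnt (sec w x) + cnt (sec w (x + 2)) = cnt w" "cnt (bsec x) + cnt (bsec (x + 2)) = 1" by auto
    moreover from this(2) have "x = 0 \<or> x = 2" using x4[of x] by (auto simp: bsec_def)
    ultimately show ?thesis using Cons.hyps[of x] Lb by (auto simp: bsec_def)
  next
    case False
    have ls: "\<And>y. lsec l y = []" using False by (rule lsec_nonb)
    have "cnt (sec w (lp l x)) + cnt (sec w (lp l x + 2)) = cnt w"
      using Cons.prems False by (simp add: ls lp_plus2 del: lp.simps)
    then show ?thesis using Cons.hyps[of "lp l x"] by (simp add: ls lp_plus2 del: lp.simps)
  qed
qed

lemma stall3: "adj x y \<Longrightarrow> cnt (sec w x) + cnt (sec w y) = cnt w \<Longrightarrow>
   \<exists>ps. sec w x = map fst ps \<and> sec w y = map snd ps \<and> (\<forall>p\<in>set ps. good p)"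
proof (induct w arbitrary: x y)
  case Nil then show ?case by (auto intro: exI[of _ "[]"])
next
  case (Cons l w)
  show ?case
  proof (cases "l = Lb")
    case Lb: True
    have le: "cnt (sec w x) + cnt (sec w y) \<le> cnt w" by (rule pair_le[OF adj_ne[OF Cons.prems(1)]])
    have eq: "cnt (bsec x) + cnt (bsec y) + (cnt (sec w x) + cnt (sec w y)) = Suc (cnt w)"
      using Cons.prems Lb by simp
    have b1: "cnt (bsec x) + cnt (bsec y) \<le> 1" using adj_ne[OF Cons.prems(1)] by (auto simp: bsec_def)
    from eq le b1 have r: "cnt (sec w x) + cnt (sec w y) = cnt w" and c1: "cnt (bsec x) + cnt (bsec y) = 1" by auto
    have xy: "(x = 0 \<and> (y = 1 \<or> y = 3)) \<or> (y = 0 \<and> (x = 1 \<or> x = 3))"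
    proof -
      have "x = 0 \<or> y = 0" using c1 by (auto simp: bsec_def split: if_splits)
      moreover have "y = x + 1 \<or> x = y + 1" using Cons.prems(1) by (simp add: adj_def)
      ultimately show ?thesis using x4[of x] x4[of y] by auto
    qed
    obtain ps where ps: "sec w x = map fst ps" "sec w y = map snd ps" "\<forall>p\<in>set ps. good p"
      using Cons.hyps[OF Cons.prems(1) r] by auto
    show ?thesis
    proof (cases "x = 0")
      case True
      then have "y = 1 \<or> y = 3" using xy by auto
      then show ?thesis using ps Lb True
        by (auto simp: bsec_def good_def intro!: exI[of _ "(Lb, if y = 3 then Lt else Ls) # ps"])
    next
      case False
      then have "y = 0" "x = 1 \<or> x = 3" using xy by auto
      then show ?thesis using ps Lb False
        by (auto simp: bsec_def good_def intro!: exI[of _ "(if x = 3 then Lt else Ls, Lb) # ps"])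
    qed
  next
    case False
    have ls: "\<And>y. lsec l y = []" using False by (rule lsec_nonb)
    have "cnt (sec w (lp l x)) + cnt (sec w (lp l y)) = cnt w"
      using Cons.prems False by (simp add: ls del: lp.simps)
    then show ?thesis using Cons.hyps[of "lp l x" "lp l y"] adj_lp[OF Cons.prems(1), of l]
      by (simp add: ls del: lp.simps)
  qed
qed


lemma rot_form:
  assumes "pm w x \<noteq> x" "pm w (pm w x) \<noteq> x"
  shows "\<exists>c. (c = 1 \<or> c = 3) \<and> (\<forall>y. pm w y = y + c)"
proof -
  obtain e c where ec: "\<forall>y. pm w y = (if e then y else - y) + c" using pm_form by blast
  have h: "\<And>y. pm w y = (if e then y else - y) + c" using ec by blast
  have e: "e" using assms(2) by (cases e) (simp_all only: h if_False, simp)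
  have "c \<noteq> 0" "c + c \<noteq> 0" using assms e by (simp_all add: h algebra_simps)
  then have "c = 1 \<or> c = 3" using x4[of c] by auto
  then show ?thesis using h e by auto
qed

lemma num4: "(4::4) = 0" "(5::4) = 1" "(6::4) = 2" "(7::4) = 3" "(8::4) = 0" "(9::4) = 1"
  "(10::4) = 2" "(11::4) = 3" "(12::4) = 0"
  by simp_all

lemma rot_sum_gen:
  assumes "c = 1 \<or> c = (3::4)"
  shows "f x + f (x + c) + f (x + c + c) + f (x + c + c + c) = (\<Sum>y\<in>UNIV. (f y :: nat))"
  using assms x4[of x] by (auto simp: sum4 num4)

lemma rot_cover_gen:
  assumes "c = 1 \<or> c = (3::4)"
  shows "y = x \<or> y = x + c \<or> y = x + c + c \<or> y = x + c + c + c"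
  using assms x4[of x] x4[of y] by auto

lemma rot_distinct_gen:
  assumes "c = 1 \<or> c = (3::4)"
  shows "distinct [x, x + c, x + c + c, x + c + c + c]"
  using assms x4[of x] by auto

lemma rot_sum:
  assumes "pm w x \<noteq> x" "pm w (pm w x) \<noteq> x"
  shows "F x + F (pm w x) + F (pm w (pm w x)) + F (pm w (pm w (pm w x))) = (\<Sum>y\<in>UNIV. (F y :: nat))"
proof -
  obtain c where c: "c = 1 \<or> c = 3" "\<And>y. pm w y = y + c" using rot_form[OF assms] by blast
  show ?thesis using rot_sum_gen[OF c(1), of F x] by (simp add: c(2) add.assoc)
qed

lemma rot_cover:
  assumes "pm w x \<noteq> x" "pm w (pm w x) \<noteq> x"
  shows "y = x \<or> y = pm w x \<or> y = pm w (pm w x) \<or> y = pm w (pm w (pm w x))"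
proof -
  obtain c where c: "c = 1 \<or> c = 3" "\<And>y. pm w y = y + c" using rot_form[OF assms] by blast
  show ?thesis using rot_cover_gen[OF c(1), of y x] by (simp add: c(2) add.assoc)
qed

lemma op_le: "cnt (op w x) \<le> cnt w"
proof (cases "pm w x = x")
  case True then show ?thesis by (simp add: op_def single_le)
next
  case F: False
  show ?thesis
  proof (cases "pm w (pm w x) = x")
    case True then show ?thesis using F pair_le[of x "pm w x" w] by (simp add: op_def)
  next
    case False
    have "cnt (op w x) = (\<Sum>y\<in>UNIV. cnt (sec w y))"
      using rot_sum[OF F False, of "\<lambda>y. cnt (sec w y)"] F False by (simp add: op_def add.assoc)
    then show ?thesis by (simp add: sum_cnt)
  qed
qed

lemma op_stall:
  assumes st: "cnt (op w x) = cnt w" and pos: "0 < cnt (sec w y)"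
  shows "\<exists>u v. op w x = u @ sec w y @ v"
proof (cases "pm w x = x")
  case True
  then have "cnt (sec w x) = cnt w" using st by (simp add: op_def)
  then have "y = x" using pair_le[of x y w] pos by (cases "y = x") auto
  then show ?thesis using True by (auto simp: op_def intro!: exI[of _ "[]"])
next
  case F: False
  show ?thesis
  proof (cases "pm w (pm w x) = x")
    case True
    then have s2: "cnt (sec w x) + cnt (sec w (pm w x)) = cnt w" using st F by (simp add: op_def)
    have "y = x \<or> y = pm w x"
    proof (rule ccontr)
      assume "\<not> (y = x \<or> y = pm w x)"
      then have "cnt (sec w x) + cnt (sec w (pm w x)) + cnt (sec w y) \<le> cnt w"
        using F by (intro triple_le) auto
      then show False using s2 pos by simp
    qed
    then show ?thesis using True F
      by (auto simp: op_def intro: exI[of _ "[]"] exI[of _ "sec w x"])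
  next
    case False
    have "y = x \<or> y = pm w x \<or> y = pm w (pm w x) \<or> y = pm w (pm w (pm w x))"
      by (rule rot_cover[OF F False])
    then show ?thesis using False F
      by (auto simp: op_def intro: exI[of _ "[]"] exI[of _ "sec w x"]
           exI[of _ "sec w x @ sec w (pm w x)"] exI[of _ "sec w x @ sec w (pm w x) @ sec w (pm w (pm w x))"])
  qed
qed

lemma pm_par: "\<exists>c. (\<forall>x. pm u x = (if even (nS u + nT u) then x else - x) + c) \<and> ((c = 0 \<or> c = 2) \<longleftrightarrow> even (nT u))"
proof (induct u)
  case Nil then show ?case by (auto intro: exI[of _ 0])
next
  case (Cons l u)
  then obtain c where c: "\<forall>x. pm u x = (if even (nS u + nT u) then x else - x) + c" "(c = 0 \<or> c = 2) \<longleftrightarrow> even (nT u)"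
    by blast
  show ?case
  proof (cases l)
    case Ls then show ?thesis using c by (auto intro!: exI[of _ c])
  next
    case Lt
    let ?c' = "(if even (nS u + nT u) then 1 else -1) + c"
    have "(?c' = 0 \<or> ?c' = 2) \<longleftrightarrow> \<not> (c = 0 \<or> c = 2)" using x4[of c] by auto
    then show ?thesis using c Lt by (auto intro!: exI[of _ ?c'] simp: algebra_simps)
  next
    case Lb then show ?thesis using c by auto
  qed
qed

lemma nonrot_of_even: assumes "even (nS u)" shows "pm u (pm u x) = x"
proof -
  obtain c where c: "\<forall>x. pm u x = (if even (nS u + nT u) then x else - x) + c" "(c = 0 \<or> c = 2) \<longleftrightarrow> even (nT u)"
    using pm_par by blast
  have h: "\<And>y. pm u y = (if even (nS u + nT u) then y else - y) + c" using c(1) by blast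
  show ?thesis
  proof (cases "even (nT u)")
    case True
    then have "c = 0 \<or> c = 2" using c(2) by simp
    then have cc: "c + c = 0" by auto
    have "even (nS u + nT u)" using True assms by simp
    then show ?thesis using cc by (simp only: h if_True) (simp add: algebra_simps)
  next
    case False
    have "\<not> even (nS u + nT u)" using False assms by simp
    then show ?thesis by (simp only: h if_False) simp
  qed
qed

lemma op_rot_nS:
  assumes "pm w x \<noteq> x" "pm w (pm w x) \<noteq> x"
  shows "nS (op w x) = 2 * cnt w" "cnt (op w x) = cnt w"
proof -
  have "nS (op w x) = (\<Sum>y\<in>UNIV. nS (sec w y))"
    using rot_sum[OF assms, of "\<lambda>y. nS (sec w y)"] assms by (simp add: op_def add.assoc)
  then show "nS (op w x) = 2 * cnt w" by (simp add: sum_nS)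
  have "cnt (op w x) = (\<Sum>y\<in>UNIV. cnt (sec w y))"
    using rot_sum[OF assms, of "\<lambda>y. cnt (sec w y)"] assms by (simp add: op_def add.assoc)
  then show "cnt (op w x) = cnt w" by (simp add: sum_cnt)
qed

lemma op_set:
  assumes cl: "\<And>y. P y \<Longrightarrow> P (pm u y)" and px: "P x" and ss: "\<And>y. P y \<Longrightarrow> set (sec u y) \<subseteq> S"
  shows "set (op u x) \<subseteq> S"
proof -
  have "P x" "P (pm u x)" "P (pm u (pm u x))" "P (pm u (pm u (pm u x)))" using px cl by blast+
  then show ?thesis using ss unfolding op_def by auto
qed

lemma sec_TA: "set u \<subseteq> {Ls, Lt} \<Longrightarrow> sec u y = []"
  by (induct u arbitrary: y) (auto simp: lsec_nonb)

lemma fo_TA: assumes "set u \<subseteq> {Ls, Lt}" shows "fo (eval u)"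
proof (rule fo_by_orbits)
  fix x
  have "op u x = []" using sec_TA[OF assms] by (simp add: op_def)
  then show "fo (eval (op u x))" by (simp add: fo_id)
qed

lemma eval_repb: "eval (replicate n Lb) = bb ^^ n"
  by (induct n) (auto simp: mult_def funpow_Suc_right simp del: funpow.simps)

lemma fo_TB: assumes "set u \<subseteq> {Lb}" shows "fo (eval u)"
proof -
  have u: "u = replicate (length u) Lb" using assms by (induct u) auto
  have bb2: "bb ^^ 2 = id" by (auto simp: numeral_2_eq_2 bb_invol)
  have "(bb ^^ length u) ^^ 2 = (bb ^^ 2) ^^ length u" by (simp add: funpow_mult mult.commute)
  also have "\<dots> = id" using bb2 by (induct "length u") auto
  finally have "(eval u) ^^ 2 = id" by (subst u) (simp add: eval_repb)
  then show ?thesis unfolding fo_def by (auto intro!: exI[of _ 2])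
qed

lemma secS: "set u \<subseteq> {Lb, Ls} \<Longrightarrow> set (sec u y) \<subseteq> (if y = 0 then {Lb} else {Ls, Lt})"
proof (induct u arbitrary: y)
  case Nil then show ?case by simp
next
  case (Cons l u)
  then have l: "l = Lb \<or> l = Ls" by auto
  have IH: "set (sec u (lp l y)) \<subseteq> (if lp l y = 0 then {Lb} else {Ls, Lt})" using Cons by auto
  have e: "lp l y = 0 \<longleftrightarrow> y = 0" using l by auto
  have b: "set (lsec l y) \<subseteq> (if y = 0 then {Lb} else {Ls, Lt})" using l by (auto simp: bsec_def split: if_splits)
  show ?case using IH b unfolding e by auto
qed

lemma pmS0: "set u \<subseteq> {Lb, Ls} \<Longrightarrow> pm u 0 = 0"
  by (induct u) auto

lemma fo_TS: assumes "set u \<subseteq> {Lb, Ls}" shows "fo (eval u)"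
proof (rule fo_by_orbits)
  fix x
  show "fo (eval (op u x))"
  proof (cases "x = 0")
    case True
    have "set (op u x) \<subseteq> {Lb}"
    proof (rule op_set[where P="\<lambda>y. y = 0"])
      show "\<And>y. y = 0 \<Longrightarrow> pm u y = 0" using pmS0[OF assms] by simp
      show "x = 0" by fact
      show "\<And>y. y = 0 \<Longrightarrow> set (sec u y) \<subseteq> {Lb}" using secS[OF assms, of 0] by simp
    qed
    then show ?thesis by (rule fo_TB)
  next
    case False
    have nz: "y \<noteq> 0 \<Longrightarrow> pm u y \<noteq> 0" for y using pmS0[OF assms] pm_inj[of u y 0] by auto
    have "set (op u x) \<subseteq> {Ls, Lt}"
    proof (rule op_set[where P="\<lambda>y. y \<noteq> 0"])
      show "\<And>y. y \<noteq> 0 \<Longrightarrow> pm u y \<noteq> 0" by (rule nz)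
      show "x \<noteq> 0" by fact
      show "\<And>y. y \<noteq> 0 \<Longrightarrow> set (sec u y) \<subseteq> {Ls, Lt}" using secS[OF assms] by (metis (full_types))
    qed
    then show ?thesis by (rule fo_TA)
  qed
qed

lemma secT: "set u \<subseteq> {Lb, Lt} \<Longrightarrow> set (sec u y) \<subseteq> (if y = 0 \<or> y = 1 then {Lb, Ls} else {Ls, Lt})"
proof (induct u arbitrary: y)
  case Nil then show ?case by simp
next
  case (Cons l u)
  then have l: "l = Lb \<or> l = Lt" by auto
  have IH: "set (sec u (lp l y)) \<subseteq> (if lp l y = 0 \<or> lp l y = 1 then {Lb, Ls} else {Ls, Lt})" using Cons by auto
  have e: "(lp l y = 0 \<or> lp l y = 1) \<longleftrightarrow> (y = 0 \<or> y = 1)" using l x4[of y] by auto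
  have b: "set (lsec l y) \<subseteq> (if y = 0 \<or> y = 1 then {Lb, Ls} else {Ls, Lt})" using l x4[of y] by (auto simp: bsec_def)
  show ?case using IH b unfolding e by auto
qed

lemma pmT01: "set u \<subseteq> {Lb, Lt} \<Longrightarrow> (pm u y = 0 \<or> pm u y = 1) \<longleftrightarrow> (y = 0 \<or> y = 1)"
proof (induct u arbitrary: y)
  case Nil then show ?case by simp
next
  case (Cons l u)
  then have l: "l = Lb \<or> l = Lt" by auto
  have e: "(lp l y = 0 \<or> lp l y = 1) \<longleftrightarrow> (y = 0 \<or> y = 1)" using l x4[of y] by auto
  have "(pm u (lp l y) = 0 \<or> pm u (lp l y) = 1) \<longleftrightarrow> (lp l y = 0 \<or> lp l y = 1)" using Cons by auto
  then show ?case using e by simp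
qed

lemma fo_TT: assumes "set u \<subseteq> {Lb, Lt}" shows "fo (eval u)"
proof (rule fo_by_orbits)
  fix x
  show "fo (eval (op u x))"
  proof (cases "x = 0 \<or> x = 1")
    case True
    have "set (op u x) \<subseteq> {Lb, Ls}"
    proof (rule op_set[where P="\<lambda>y. y = 0 \<or> y = 1"])
      show "\<And>y. y = 0 \<or> y = 1 \<Longrightarrow> pm u y = 0 \<or> pm u y = 1" using pmT01[OF assms] by blast
      show "x = 0 \<or> x = 1" by fact
      show "\<And>y. y = 0 \<or> y = 1 \<Longrightarrow> set (sec u y) \<subseteq> {Lb, Ls}" using secT[OF assms] by (metis (full_types))
    qed
    then show ?thesis by (rule fo_TS)
  next
    case False
    have "set (op u x) \<subseteq> {Ls, Lt}"
    proof (rule op_set[where P="\<lambda>y. \<not> (y = 0 \<or> y = 1)"])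
      show "\<And>y. \<not> (y = 0 \<or> y = 1) \<Longrightarrow> \<not> (pm u y = 0 \<or> pm u y = 1)" using pmT01[OF assms] by blast
      show "\<not> (x = 0 \<or> x = 1)" by fact
      show "\<And>y. \<not> (y = 0 \<or> y = 1) \<Longrightarrow> set (sec u y) \<subseteq> {Ls, Lt}" using secT[OF assms] by (metis (full_types))
    qed
    then show ?thesis by (rule fo_TA)
  qed
qed


definition subl :: "lt list \<Rightarrow> lt list \<Rightarrow> bool" where
  "subl P z \<longleftrightarrow> (\<exists>a b. z = a @ P @ b)"

definition cyc :: "lt list \<Rightarrow> lt list \<Rightarrow> bool" where
  "cyc P c \<longleftrightarrow> (\<exists>u v. c = u @ v \<and> subl P (v @ u))"

lemma subl_nth:
  assumes "i + length P \<le> length L" "\<And>j. j < length P \<Longrightarrow> L ! (i + j) = P ! j"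
  shows "subl P L"
proof -
  have "take (length P) (drop i L) = P"
    using assms by (intro nth_equalityI) auto
  then have "L = take i L @ P @ drop (i + length P) L"
    by (metis append_take_drop_id drop_drop add.commute)
  then show ?thesis unfolding subl_def by blast
qed

lemma cyc_of_double:
  assumes "subl P (c @ c)" "length P \<le> length c"
  shows "cyc P c"
proof -
  obtain a b where ab: "c @ c = a @ P @ b" using assms(1) unfolding subl_def by blast
  show ?thesis
  proof (cases "length a \<le> length c")
    case True
    define u where "u = take (length a) c"
    define v where "v = drop (length a) c"
    have c: "c = u @ v" unfolding u_def v_def by simp
    have "take (length a) (c @ c) = a" using ab by simp
    then have a: "a = u" using True unfolding u_def by simp
    have "drop (length a) (c @ c) = P @ b" using ab by simp
    then have "v @ c = P @ b" using True unfolding v_def by simp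
    then have e: "(v @ u) @ v = P @ b" using c by simp
    have lp: "length P \<le> length (v @ u)" using assms(2) c by simp
    have "take (length P) ((v @ u) @ v) = P" using e by simp
    then have "take (length P) (v @ u) = P" using lp by simp
    then have "v @ u = P @ drop (length P) (v @ u)" by (metis append_take_drop_id)
    then have "subl P (v @ u)" unfolding subl_def by (rule_tac x="[]" in exI) simp
    then show ?thesis unfolding cyc_def using c by blast
  next
    case False
    have "drop (length c) (c @ c) = drop (length c) a @ P @ b" using ab False by simp
    then have "c = drop (length c) a @ P @ b" by simp
    then have "subl P (c @ [])" unfolding subl_def by auto
    then show ?thesis unfolding cyc_def by (rule_tac x="[]" in exI) auto
  qed
qed

lemma comb:
  assumes g: "\<forall>p\<in>set ps. good p" and cdef: "c = map fst ps @ map snd ps"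
  shows "set c \<subseteq> {Lb, Ls} \<or> set c \<subseteq> {Lb, Lt} \<or> cyc [Lb, Lb] c \<or> cyc [Lb, Ls, Lb] c"
proof -
  define k where "k = length ps"
  define isb where "isb j \<longleftrightarrow> fst (ps ! j) = Lb" for j
  define nb where "nb j = (if isb j then snd (ps ! j) else fst (ps ! j))" for j
  have gj: "good (ps ! j)" if "j < k" for j using g that unfolding k_def by auto
  have fst_j: "fst (ps ! j) = (if isb j then Lb else nb j)" if "j < k" for j
    unfolding isb_def nb_def by simp
  have snd_j: "snd (ps ! j) = (if isb j then nb j else Lb)" if "j < k" for j
    using gj[OF that] unfolding isb_def nb_def good_def by auto
  have nb_j: "nb j \<in> {Ls, Lt}" if "j < k" for j
    using gj[OF that] unfolding isb_def nb_def good_def by auto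
  have lc: "length c = 2 * k" unfolding cdef k_def by simp
  have c_nth: "c ! m = (if m < k then fst (ps ! m) else snd (ps ! (m - k)))" if "m < 2 * k" for m
    using that unfolding cdef k_def by (simp add: nth_append)
  have cc_nth: "(c @ c) ! m = c ! (m mod (2 * k))" if "m < 4 * k" for m
  proof (cases "m < 2 * k")
    case True then show ?thesis by (simp add: nth_append lc)
  next
    case False
    then have "m mod (2 * k) = m - 2 * k" using that by (simp add: le_mod_geq)
    then show ?thesis using False by (simp add: nth_append lc)
  qed
  have sub_cc: "cyc P c" if "subl P (c @ c)" "length P \<le> 2 * k" for P
    using cyc_of_double[OF that(1)] that(2) lc by simp
  show ?thesis
  proof (cases "k = 0")
    case True then have "c = []" unfolding cdef k_def by simp
    then show ?thesis by simp
  next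
    case kpos: False
    show ?thesis
    proof (cases "\<exists>j. Suc j < k \<and> isb j = isb (Suc j)")
      case True
      then obtain j where j: "Suc j < k" "isb j = isb (Suc j)" by blast
      show ?thesis
      proof (cases "isb j")
        case True
        have "subl [Lb, Lb] (c @ c)"
        proof (rule subl_nth[where i=j])
          show "j + length [Lb, Lb] \<le> length (c @ c)" using j lc by simp
          fix i assume "i < length [Lb, Lb]"
          then have "i = 0 \<or> i = 1" by auto
          then show "(c @ c) ! (j + i) = [Lb, Lb] ! i"
            using j True by (auto simp: nth_append lc c_nth fst_j)
        qed
        then show ?thesis using sub_cc kpos by auto
      next
        case False
        have "subl [Lb, Lb] (c @ c)"
        proof (rule subl_nth[where i="k + j"])
          show "k + j + length [Lb, Lb] \<le> length (c @ c)" using j lc by simp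
          fix i assume "i < length [Lb, Lb]"
          then have "i = 0 \<or> i = 1" by auto
          then show "(c @ c) ! (k + j + i) = [Lb, Lb] ! i"
            using j False by (auto simp: nth_append lc c_nth snd_j)
        qed
        then show ?thesis using sub_cc kpos by auto
      qed
    next
      case False
      then have alt: "\<And>j. Suc j < k \<Longrightarrow> isb (Suc j) \<longleftrightarrow> \<not> isb j" by blast
      have isbj: "j < k \<Longrightarrow> isb j \<longleftrightarrow> (isb 0 \<longleftrightarrow> even j)" for j
      proof (induct j)
        case 0 then show ?case by simp
      next
        case (Suc j) then show ?case using alt[of j] by auto
      qed
      show ?thesis
      proof (cases "even k")
        case True
        then have k2: "k \<ge> 2" using kpos by presburger
        have ok: "odd (k - 1)" using True kpos by simp
        show ?thesis
        proof (cases "isb 0")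
          case False
          have "subl [Lb, Lb] (c @ c)"
          proof (rule subl_nth[where i="k - 1"])
            show "k - 1 + length [Lb, Lb] \<le> length (c @ c)" using lc k2 by simp
            fix i assume "i < length [Lb, Lb]"
            then have "i = 0 \<or> i = 1" by auto
            moreover have "isb (k - 1)" using isbj[of "k - 1"] False ok kpos by simp
            ultimately show "(c @ c) ! (k - 1 + i) = [Lb, Lb] ! i"
              using False kpos by (auto simp: nth_append lc c_nth fst_j snd_j)
          qed
          then show ?thesis using sub_cc k2 by auto
        next
          case True
          have "subl [Lb, Lb] (c @ c)"
          proof (rule subl_nth[where i="2 * k - 1"])
            show "2 * k - 1 + length [Lb, Lb] \<le> length (c @ c)" using lc k2 by simp
            fix i assume "i < length [Lb, Lb]"
            then have "i = 0 \<or> i = 1" by auto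
            moreover have "\<not> isb (k - 1)" using isbj[of "k - 1"] True ok kpos by simp
            moreover have "2 * k - 1 - k = k - 1" by simp
            ultimately show "(c @ c) ! (2 * k - 1 + i) = [Lb, Lb] ! i"
              using True kpos k2 by (auto simp: nth_append lc c_nth fst_j snd_j)
          qed
          then show ?thesis using sub_cc k2 by auto
        qed
      next
        case odd: False
        show ?thesis
        proof (cases "\<exists>j<k. nb j = Ls")
          case False
          then have all: "\<forall>j<k. nb j = Lt" using nb_j by blast
          have "x \<in> {Lb, Lt}" if "x \<in> set c" for x
          proof -
            from that obtain j where j: "j < k" "x = fst (ps ! j) \<or> x = snd (ps ! j)"
              unfolding cdef k_def by (auto simp: in_set_conv_nth)
            then show ?thesis using fst_j[of j] snd_j[of j] all by (cases "isb j") auto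
          qed
          then have "set c \<subseteq> {Lb, Lt}" by blast
          then show ?thesis by simp
        next
          case True
          then obtain j where j: "j < k" "nb j = Ls" by blast
          show ?thesis
          proof (cases "k = 1")
            case True
            have "x \<in> {Lb, Ls}" if "x \<in> set c" for x
            proof -
              from that obtain i where i: "i < k" "x = fst (ps ! i) \<or> x = snd (ps ! i)"
                unfolding cdef k_def by (auto simp: in_set_conv_nth)
              then have "i = j" using True j by simp
              then show ?thesis using i fst_j[of i] snd_j[of i] j by (cases "isb i") auto
            qed
            then have "set c \<subseteq> {Lb, Ls}" by blast
            then show ?thesis by simp
          next
            case False
            then have k3: "k \<ge> 3" using odd kpos by presburger
            have cform: "(c @ c) ! m = (if (isb 0 \<longleftrightarrow> even m) then Lb else nb (m mod k))" if "m < 4 * k" for m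
            proof -
              have m2: "m mod (2 * k) < 2 * k" using kpos by simp
              have e1: "even (m mod (2 * k)) \<longleftrightarrow> even m"
                by (simp add: even_iff_mod_2_eq_zero mod_mod_cancel)
              have e2: "(m mod (2 * k)) mod k = m mod k"
                by (metis mod_mod_cancel dvd_triv_right)
              define m' where "m' = m mod (2 * k)"
              have "c ! m' = (if (isb 0 \<longleftrightarrow> even m') then Lb else nb (m' mod k))"
              proof (cases "m' < k")
                case True then show ?thesis using isbj[of m'] by (simp add: c_nth m'_def m2 fst_j)
              next
                case False
                have mk: "m' - k < k" using m2 m'_def False by simp
                have "even (m' - k) \<longleftrightarrow> \<not> even m'" using False odd by simp
                moreover have "m' mod k = m' - k" using False mk by (simp add: le_mod_geq)
                ultimately show ?thesis using isbj[OF mk] mk m2 m'_def False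
                  by (auto simp: c_nth snd_j)
              qed
              then show ?thesis using cc_nth[OF that] e1 e2 m'_def by simp
            qed
            obtain m where m: "m = j + k \<or> m = j + 2 * k" "\<not> (isb 0 \<longleftrightarrow> even m)"
            proof (cases "isb 0 \<longleftrightarrow> even (j + k)")
              case True
              then have "\<not> (isb 0 \<longleftrightarrow> even (j + 2 * k))" using odd by simp
              then show ?thesis using that by blast
            next
              case False then show ?thesis using that by blast
            qed
            have mmod: "m mod k = j" using m(1) j by auto
            have mb: "m \<ge> 1" "m + 1 < 4 * k" using m(1) j k3 by auto
            have "subl [Lb, Ls, Lb] (c @ c)"
            proof (rule subl_nth[where i="m - 1"])
              show "m - 1 + length [Lb, Ls, Lb] \<le> length (c @ c)" using lc mb by simp
              fix i assume "i < length [Lb, Ls, Lb]"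
              then have "i = 0 \<or> i = 1 \<or> i = 2" by auto
              moreover have "even (m - 1) \<longleftrightarrow> \<not> even m" "even (m + 1) \<longleftrightarrow> \<not> even m" using mb by auto
              moreover have "m - 1 + 2 = m + 1" using mb by simp
              ultimately show "(c @ c) ! (m - 1 + i) = [Lb, Ls, Lb] ! i"
                using cform[of "m - 1"] cform[of m] cform[of "m + 1"] mb m(2) mmod j by auto
            qed
            then show ?thesis using sub_cc k3 by auto
          qed
        qed
      qed
    qed
  qed
qed


lemma fo_bb:
  assumes IH: "\<And>w'. cnt w' < cnt z \<Longrightarrow> fo (eval w')" and s: "subl [Lb, Lb] z"
  shows "fo (eval z)"
proof -
  obtain a b where z: "z = a @ [Lb, Lb] @ b" using s unfolding subl_def by blast
  have "cnt (a @ b) < cnt z" using z by simp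
  then have "fo (eval (a @ b))" by (rule IH)
  then show ?thesis using z eval_bb_cancel by simp
qed

lemma fo_cyc:
  assumes H: "\<And>z'. cnt z' = cnt c \<Longrightarrow> subl P z' \<Longrightarrow> fo (eval z')" and cy: "cyc P c"
  shows "fo (eval c)"
proof -
  obtain u v where uv: "c = u @ v" "subl P (v @ u)" using cy unfolding cyc_def by blast
  have "fo (eval (v @ u))" using H[OF _ uv(2)] uv(1) by simp
  then have "fo (eval (u @ v))" by (rule fo_rot)
  then show ?thesis using uv by simp
qed

lemma subl_mid: "subl P y \<Longrightarrow> subl P (u @ y @ v)"
  unfolding subl_def by (metis append.assoc)

lemma lbsb:
  assumes IH: "\<And>w'. cnt w' < cnt z \<Longrightarrow> fo (eval w')" and s: "subl [Lb, Ls, Lb] z"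
  shows "fo (eval z)"
proof -
  obtain a b where z: "z = a @ [Lb, Ls, Lb] @ b" using s unfolding subl_def by blast
  obtain y0 where y0: "pm a y0 = 0" using pm_surj by blast
  have sz: "sec z y0 = sec a y0 @ [Lb, Lb] @ sec b (pm [Lb, Ls, Lb] 0)"
    using y0 z by (simp add: sec_append bsec_def)
  have pos: "0 < cnt (sec z y0)" using sz by simp
  have sb: "subl [Lb, Lb] (sec z y0)" using sz unfolding subl_def by blast
  show ?thesis
  proof (rule fo_by_orbits)
    fix x
    show "fo (eval (op z x))"
    proof (cases "cnt (op z x) < cnt z")
      case True then show ?thesis by (rule IH)
    next
      case False
      then have st: "cnt (op z x) = cnt z" using op_le[of z x] by simp
      obtain u v where "op z x = u @ sec z y0 @ v" using op_stall[OF st pos] by blast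
      then have "subl [Lb, Lb] (op z x)" using subl_mid[OF sb] by simp
      moreover have "\<And>w'. cnt w' < cnt (op z x) \<Longrightarrow> fo (eval w')" using IH st by simp
      ultimately show ?thesis using fo_bb by blast
    qed
  qed
qed

lemma fo_op_small:
  assumes IH: "\<And>w'. cnt w' < cnt z \<Longrightarrow> fo (eval w')" and inv: "pm z (pm z x) = x"
  shows "fo (eval (op z x))"
proof (cases "cnt (op z x) < cnt z")
  case True then show ?thesis by (rule IH)
next
  case False
  then have st: "cnt (op z x) = cnt z" using op_le[of z x] by simp
  show ?thesis
  proof (cases "pm z x = x")
    case True
    then have "cnt (sec z x) = cnt z" "op z x = sec z x" using st by (simp_all add: op_def)
    then show ?thesis using stall1 fo_TB by metis
  next
    case F: False
    define y where "y = pm z x"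
    have opd: "op z x = sec z x @ sec z y" using F inv by (simp add: op_def y_def)
    have s2: "cnt (sec z x) + cnt (sec z y) = cnt z" using st opd by simp
    show ?thesis
    proof (cases "y = x + 2")
      case True
      then have "set (op z x) \<subseteq> {Lb, Ls}" using stall2[of z x] s2 opd by simp
      then show ?thesis by (rule fo_TS)
    next
      case False
      have "y \<noteq> x" using F y_def by simp
      then have adj: "adj x y" using False x4[of x] x4[of y] by (auto simp: adj_def)
      obtain ps where ps: "sec z x = map fst ps" "sec z y = map snd ps" "\<forall>p\<in>set ps. good p"
        using stall3[OF adj s2] by blast
      let ?c = "map fst ps @ map snd ps"
      have c: "op z x = ?c" using opd ps by simp
      have ck: "cnt ?c = cnt z" using st c by simp
      have "set ?c \<subseteq> {Lb, Ls} \<or> set ?c \<subseteq> {Lb, Lt} \<or> cyc [Lb, Lb] ?c \<or> cyc [Lb, Ls, Lb] ?c"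
        by (rule comb[OF ps(3) refl])
      then show ?thesis
      proof (elim disjE)
        assume "set ?c \<subseteq> {Lb, Ls}" then show ?thesis using c fo_TS by simp
      next
        assume "set ?c \<subseteq> {Lb, Lt}" then show ?thesis using c fo_TT by simp
      next
        assume cy: "cyc [Lb, Lb] ?c"
        have "fo (eval ?c)"
          by (rule fo_cyc[OF _ cy]) (rule fo_bb, use IH ck in auto)
        then show ?thesis using c by simp
      next
        assume cy: "cyc [Lb, Ls, Lb] ?c"
        have "fo (eval ?c)"
          by (rule fo_cyc[OF _ cy]) (rule lbsb, use IH ck in auto)
        then show ?thesis using c by simp
      qed
    qed
  qed
qed

lemma fo_nonrot:
  assumes IH: "\<And>w'. cnt w' < cnt z \<Longrightarrow> fo (eval w')" and inv: "\<And>x. pm z (pm z x) = x"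
  shows "fo (eval z)"
  by (rule fo_by_orbits) (rule fo_op_small[OF IH inv])

lemma fo_all: "fo (eval w)"
proof (induct "cnt w" arbitrary: w rule: less_induct)
  case less
  have IH: "\<And>w'. cnt w' < cnt w \<Longrightarrow> fo (eval w')" using less by blast
  show ?case
  proof (rule fo_by_orbits)
    fix x
    show "fo (eval (op w x))"
    proof (cases "pm w (pm w x) = x")
      case True then show ?thesis using fo_op_small[OF IH, where x=x] by blast
    next
      case False
      have F: "pm w x \<noteq> x" using False by auto
      have n: "nS (op w x) = 2 * cnt w" "cnt (op w x) = cnt w" using op_rot_nS[OF F False] by auto
      show ?thesis
      proof (rule fo_nonrot)
        show "\<And>w'. cnt w' < cnt (op w x) \<Longrightarrow> fo (eval w')" using IH n by simp
        show "\<And>y. pm (op w x) (pm (op w x) y) = y" by (rule nonrot_of_even) (simp add: n)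
      qed
    qed
  qed
qed


lemma inv_eval: "inv (eval w) = eval (rev w)"
  by (rule inv_unique_comp) (simp_all add: eval_rev_cancel1 eval_rev_cancel2)

lemma eval_s: "eval [Ls] = s" by (simp add: mult_def)
lemma eval_sr: "eval [Lt] = mult s r" by (simp add: mult_def)
lemma eval_b: "eval [Lb] = bb" by (simp add: mult_def)
lemma eval_r: "eval [Ls, Lt] = r"
proof -
  have ss: "s \<circ> s = id" using ev_invol[of Ls] by simp
  have "eval [Ls, Lt] = (r \<circ> s) \<circ> s" by (simp add: mult_def)
  also have "\<dots> = r" using ss by (simp add: comp_assoc)
  finally show ?thesis .
qed

lemma mult_eval: "mult (eval u) (eval v) = eval (u @ v)"
  by (simp add: mult_def eval_append)

lemma gen_eval: "g \<in> gen {s, r, bb} \<Longrightarrow> \<exists>w. g = eval w"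
proof (induct rule: gen.induct)
  case gen_id then show ?case by (rule exI[of _ "[]"]) simp
next
  case (gen_mul g x)
  then obtain w where w: "g = eval w" by blast
  from gen_mul have "x = s \<or> x = r \<or> x = bb" by auto
  then obtain v where "x = eval v" using eval_s eval_r eval_b by metis
  then show ?case using w mult_eval by metis
next
  case (gen_inv g x)
  then obtain w where w: "g = eval w" by blast
  from gen_inv have "x = s \<or> x = r \<or> x = bb" by auto
  then obtain v where "x = eval v" using eval_s eval_r eval_b by metis
  then have "inv x = eval (rev v)" by (simp add: inv_eval)
  then show ?case using w mult_eval by metis
qed

lemma periodic_G: "periodic G"
  unfolding periodic_def G_def
  using gen_eval fo_all unfolding fo_def by metis

lemma r_in_A: "r \<in> A"
proof -
  have "mult id r \<in> A" unfolding A_def by (rule gen_mul) (auto intro: gen_id)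
  then show ?thesis by (simp add: mult_def)
qed

lemma sr_in_A: "mult s r \<in> A"
proof -
  have "mult id s \<in> A" unfolding A_def by (rule gen_mul) (auto intro: gen_id)
  then have "mult (mult id s) r \<in> A" unfolding A_def by (rule gen_mul) auto
  then show ?thesis by (simp add: mult_def)
qed

lemma bb_in_B: "bb \<in> B"
proof -
  have "mult id bb \<in> B" unfolding B_def by (rule gen_mul) (auto intro: gen_id)
  then show ?thesis by (simp add: mult_def)
qed

lemma sect_bb1: "sect bb [1] = s"
  by (rule ext) (simp add: sect_def)

lemma sect_bb3: "sect bb [3] = mult s r"
  by (rule ext) (simp add: sect_def)

lemma not_oa: "\<not> orbitwise_abelian A B"
proof
  assume oa: "orbitwise_abelian A B"
  define H where "H = gen {sect b' [letter c 0] | c b'. c \<in> gen {r} - stab A 0 \<and> b' \<in> B}"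
  have ab: "abelian H" using oa r_in_A unfolding orbitwise_abelian_def H_def by blast
  have r1: "mult id r \<in> gen {r}" by (rule gen_mul) (auto intro: gen_id)
  then have r2: "mult (mult id r) r \<in> gen {r}" by (rule gen_mul) auto
  then have r3: "mult (mult (mult id r) r) r \<in> gen {r}" by (rule gen_mul) auto
  have gr: "r \<in> gen {r}" using r1 by (simp add: mult_def)
  have gr3: "r \<circ> r \<circ> r \<in> gen {r}" using r3 by (simp add: mult_def comp_assoc)
  have lr: "letter r 0 = 1" by (simp add: letter_def r_def rooted_def)
  have lr3: "letter (r \<circ> r \<circ> r) 0 = 3" by (simp add: letter_def r_def rooted_def)
  have rA: "r \<in> A" by (rule r_in_A)
  have r3A: "r \<circ> r \<circ> r \<in> A"
  proof -
    have "mult (mult r r) r \<in> A" unfolding A_def using rA unfolding A_def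
      by (intro gen_mul) auto
    then show ?thesis by (simp add: mult_def comp_assoc)
  qed
  have S1: "s \<in> {sect b' [letter c 0] | c b'. c \<in> gen {r} - stab A 0 \<and> b' \<in> B}"
  proof -
    have "s = sect bb [letter r 0]" using lr sect_bb1 by simp
    moreover have "r \<in> gen {r} - stab A 0" using gr lr by (simp add: stab_def)
    ultimately show ?thesis using bb_in_B by blast
  qed
  have "mult id s \<in> H" unfolding H_def by (rule gen_mul[OF gen_id S1])
  then have sH: "s \<in> H" by (simp add: mult_def)
  have S2: "mult s r \<in> {sect b' [letter c 0] | c b'. c \<in> gen {r} - stab A 0 \<and> b' \<in> B}"
  proof -
    have "mult s r = sect bb [letter (r \<circ> r \<circ> r) 0]" using lr3 sect_bb3 by simp
    moreover have "r \<circ> r \<circ> r \<in> gen {r} - stab A 0" using gr3 lr3 by (simp add: stab_def)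
    ultimately show ?thesis using bb_in_B by blast
  qed
  have "mult id (mult s r) \<in> H" unfolding H_def by (rule gen_mul[OF gen_id S2])
  then have tH: "mult s r \<in> H" by (simp add: mult_def)
  have "mult s (mult s r) = mult (mult s r) s" using ab sH tH unfolding abelian_def by blast
  then have "mult s (mult s r) [0] = mult (mult s r) s [0]" by simp
  then show False by (simp add: mult_def s_def r_def rooted_def s_perm_def)
qed

definition dd :: aut where "dd = eval [Ls, Lt, Lt, Lt, Ls]"

lemma dd0: "dd [0] = [3]" by (simp add: dd_def eval_cons eval_nil del: eval.simps)
lemma dd3: "dd [3] = [0]" by (simp add: dd_def eval_cons eval_nil del: eval.simps)

lemma dd_pow: "(dd ^^ n) [0] = (if even n then [0] else [3])"
  by (induct n) (auto simp: dd0 dd3)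

lemma orb_dd: "orb dd 0 = {0, 3}"
proof -
  have "orb dd 0 = {letter (dd ^^ n) 0 | n. True}" by (simp add: orb_def)
  also have "\<dots> = {0, 3}"
  proof
    show "{letter (dd ^^ n) 0 | n. True} \<subseteq> {0, 3}" by (auto simp: letter_def dd_pow)
    have "0 = letter (dd ^^ 0) 0" "3 = letter (dd ^^ 1) 0" by (simp_all add: letter_def dd_pow dd0)
    then show "{0, 3} \<subseteq> {letter (dd ^^ n) 0 | n. True}" by blast
  qed
  finally show ?thesis .
qed

lemma secprod_dd: "secprod bb dd = mult s r"
proof -
  have "orblen dd 0 = 2" by (simp add: orblen_def orb_dd)
  moreover have "letter (dd ^^ 1) 0 = 3" by (simp add: letter_def dd_pow dd0)
  ultimately show ?thesis by (simp add: secprod_def sect_bb3 mult_def numeral_2_eq_2)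
qed

lemma dd_CC: "dd \<in> CC A (mult s r) 1"
proof -
  have mp: "r \<in> mp A 0 1" using r_in_A by (simp add: mp_def letter_def r_def rooted_def)
  have "mult (mult r (mult s r)) (inv r) = dd"
  proof -
    have "mult (mult r (mult s r)) (inv r) = mult (mult (eval [Ls, Lt]) (eval [Lt])) (inv (eval [Ls, Lt]))"
      by (simp only: eval_r eval_sr)
    also have "\<dots> = eval (([Ls, Lt] @ [Lt]) @ rev [Ls, Lt])" by (simp only: inv_eval mult_eval)
    also have "\<dots> = dd" by (simp add: dd_def del: eval.simps)
    finally show ?thesis .
  qed
  then have e: "dd = mult (mult r (mult s r)) (inv r)" by simp
  show ?thesis unfolding CC_def using mp e by blast
qed

lemma sr_in_Sigma: "mult s r \<in> Sigma A {bb} {mult s r}"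
proof -
  have k: "secprod bb dd \<in> {secprod b' c | c b'. c \<in> CC A (mult s r) 1 \<and> b' \<in> {bb}}"
    using dd_CC by blast
  have "mult id (secprod bb dd) \<in> gen {secprod b' c | c b'. c \<in> CC A (mult s r) 1 \<and> b' \<in> {bb}}"
    by (rule gen_mul[OF gen_id k])
  then have K: "mult s r \<in> gen {secprod b' c | c b'. c \<in> CC A (mult s r) 1 \<and> b' \<in> {bb}}"
    by (simp add: secprod_dd mult_def)
  have H: "id \<in> derived (HH A {bb} (mult s r) 1)" unfolding derived_def by (rule gen_id)
  have "mult (mult s r) id \<in> sigma A {bb} (mult s r) 1"
    unfolding sigma_def setprod_def using K H by blast
  then have "mult s r \<in> sigma A {bb} (mult s r) 1" by (simp add: mult_def)
  then show ?thesis unfolding Sigma_def by blast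
qed

lemma Sigma_mono: "P \<subseteq> Q \<Longrightarrow> Sigma A S P \<subseteq> Sigma A S Q"
  unfolding Sigma_def by blast

lemma sr_iter: "mult s r \<in> (Sigma A {bb} ^^ m) {mult s r}"
proof (induct m)
  case 0 then show ?case by simp
next
  case (Suc m)
  then have "{mult s r} \<subseteq> (Sigma A {bb} ^^ m) {mult s r}" by simp
  then have "Sigma A {bb} {mult s r} \<subseteq> Sigma A {bb} ((Sigma A {bb} ^^ m) {mult s r})"
    by (rule Sigma_mono)
  then show ?case using sr_in_Sigma by auto
qed

lemma sr_ne_id: "mult s r \<noteq> id"
proof
  assume "mult s r = id"
  then have "mult s r [0] = [0]" by simp
  then show False by (simp add: mult_def s_def r_def rooted_def s_perm_def)
qed

lemma not_et: "\<not> eventually_trivial A {bb}"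
proof
  assume "eventually_trivial A {bb}"
  then obtain n where n: "\<forall>m>n. (Sigma A {bb} ^^ m) {mult s r} \<subseteq> {id}"
    using sr_in_A unfolding eventually_trivial_def by blast
  then have "mult s r \<in> {id}" using sr_iter[of "Suc n"] by blast
  then show False using sr_ne_id by simp
qed

theorem mainTheorem16:
  shows "\<not> orbitwise_abelian A B
       \<and> mult s r \<in> Sigma A {bb} {mult s r}
       \<and> \<not> eventually_trivial A {bb}
       \<and> periodic G"
  using not_oa sr_in_Sigma not_et periodic_G by blast


end
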